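(* Let $T_R:\mathbb{Z}\to\mathbb{Z}$ be defined by $T_R(n)=3n/4$ if $n\equiv 0\pmod 4$, $T_R(n)=(n-2)/4$ if $n\equiv 2\pmod 4$, and $T_R(n)=(3n+1)/2$ if $n$ is odd. Define $T_R^*:\mathbb{Z}\to\mathbb{Z}$ by $T_R^*(n)=T_R(n)$ if $n\equiv 1\pmod 2$ or $n\equiv 0\pmod 4$; $T_R^*(n)=T_R^2(n)$ if $n\equiv 6\pmod 8$ or $n\equiv 2\pmod{16}$; and $T_R^*(n)=T_R^3(n)$ if $n\equiv 26\pmod{32}$, $n\equiv 10\pmod{64}$ or $n\equiv 42\pmod{64}$. Then for every integer $j$: (i) (class $0 \bmod 3$) $T_R^*(12j)=9j$, $T_R^*(48j+18)=9j+3$, $T_R^*(192j+138)=9j+6$, $T_R^*(192j+42)=3j$, $T_R^*(96j+90)=9j+8$, $T_R^*(24j+6)=9j+2$, $T_R^*(6j+3)=9j+5$; (ii) (class $1 \bmod 3$) $T_R^*(12j+4)=9j+3$, $T_R^*(48j+34)=9j+6$, $T_R^*(192j+10)=9j$, $T_R^*(192j+106)=3j+1$, $T_R^*(96j+58)=9j+5$, $T_R^*(24j+22)=9j+8$, $T_R^*(6j+1)=9j+2$; (iii) (class $2 \bmod 3$) $T_R^*(12j+8)=9j+6$, $T_R^*(48j+2)=9j$, $T_R^*(192j+74)=9j+3$, $T_R^*(192j+170)=3j+2$, $T_R^*(96j+26)=9j+2$, $T_R^*(24j+14)=9j+5$, $T_R^*(6j+5)=9j+8$. Here, for each $r\in\{0,1,2\}$,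 the seven residue classes listed in item (i), (ii), (iii) respectively partition the set of integers congruent to $r \pmod 3$. In particular $T_R^*$ maps the integers congruent to $0$ or $2 \pmod 3$ into the integers congruent to $0$ or $2\pmod 3$.
   Context: $T_R^k$ denotes the $k$-fold iterate of $T_R$. *)

theory Defs
  imports Main
begin

definition TR :: "int \<Rightarrow> int" where
  "TR n = (if n mod 4 = 0 then (3 * n) div 4
           else if n mod 4 = 2 then (n - 2) div 4
           else (3 * n + 1) div 2)"

text \<open>T_R^*; the three explicit cases cover all integers, the final else is unreachable.\<close>
definition TRstar :: "int \<Rightarrow> int" where
  "TRstar n = (if n mod 2 = 1 \<or> n mod 4 = 0 then TR n
               else if n mod 8 = 6 \<or> n mod 16 = 2 then (TR ^^ 2) n
               else if n mod 32 = 26 \<or> n mod 64 = 10 \<or> n mod 64 = 42 then (TR ^^ 3) n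
               else undefined)"

definition partitions_list :: "'a set list \<Rightarrow> 'a set \<Rightarrow> bool" where
  "partitions_list Cs S \<longleftrightarrow>
     (\<forall>i < length Cs. \<forall>k < length Cs. i \<noteq> k \<longrightarrow> Cs ! i \<inter> Cs ! k = {}) \<and> \<Union>(set Cs) = S"

end

theory Submission
  imports Defs
begin

lemma T0: "TR (4*k) = 3*k"
  by (simp add: TR_def)
lemma M: "(n::int) = m*k + r \<Longrightarrow> 0 \<le> r \<Longrightarrow> r < m \<Longrightarrow> n mod m = r"
  by simp
lemma T2: "TR (4*k+2) = k"
proof -
  have "(4*k+2) mod 4 = 2" by (rule M[of _ _ k]) simp_all
  then show ?thesis by (simp add: TR_def)
qed
lemma T1: "TR (2*k+1) = 3*k+2"
proof -
  have "(2*k+1) mod 2 = 1" by (rule M[of _ _ k]) simp_all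
  moreover have "(2*k+1) mod 4 mod 2 = (2*k+1) mod 2" by (rule mod_mod_cancel) simp
  ultimately have b: "(2*k+1) mod 4 mod 2 = 1" by simp
  have a: "(2*k+1) mod 4 \<noteq> 0" "(2*k+1) mod 4 \<noteq> 2"
    using b by auto
  have "3*(2*k+1)+1 = 2*(3*k+2)" by simp
  then have "(3*(2*k+1)+1) div 2 = 3*k+2" by simp
  then show ?thesis using a by (simp add: TR_def)
qed
lemma S1: "n mod 2 = 1 \<or> n mod 4 = 0 \<Longrightarrow> TRstar n = TR n"
  by (simp add: TRstar_def)
lemma S2: "\<not> (n mod 2 = 1 \<or> n mod 4 = 0) \<Longrightarrow> n mod 8 = 6 \<or> n mod 16 = 2 \<Longrightarrow> TRstar n = TR (TR n)"
  by (simp add: TRstar_def numeral_2_eq_2 del: de_Morgan_disj)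
lemma S3: "\<not> (n mod 2 = 1 \<or> n mod 4 = 0) \<Longrightarrow> \<not> (n mod 8 = 6 \<or> n mod 16 = 2) \<Longrightarrow>
  n mod 32 = 26 \<or> n mod 64 = 10 \<or> n mod 64 = 42 \<Longrightarrow> TRstar n = TR (TR (TR n))"
  by (simp add: TRstar_def numeral_3_eq_3 del: de_Morgan_disj)

lemma w1: "TRstar (12*j) = 9*j"
proof -
  have q2: "(12*j) mod 2 = 0" by (rule M[of _ _ "6*j"]) (simp_all add: algebra_simps)
  have q4: "(12*j) mod 4 = 0" by (rule M[of _ _ "3*j"]) (simp_all add: algebra_simps)
  note mods = q2 q4
  have m: "(12*j) mod 2 = 1 \<or> (12*j) mod 4 = 0" using mods by simp
  have h1: "TR (12*j) = 9*j" using T0[of "3*j"] by (simp add: algebra_simps)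
  show ?thesis using S1[OF m] h1 by simp
qed

lemma w2: "TRstar (48*j+18) = 9*j+3"
proof -
  have q2: "(48*j+18) mod 2 = 0" by (rule M[of _ _ "24*j+9"]) (simp_all add: algebra_simps)
  have q4: "(48*j+18) mod 4 = 2" by (rule M[of _ _ "12*j+4"]) (simp_all add: algebra_simps)
  have q8: "(48*j+18) mod 8 = 2" by (rule M[of _ _ "6*j+2"]) (simp_all add: algebra_simps)
  have q16: "(48*j+18) mod 16 = 2" by (rule M[of _ _ "3*j+1"]) (simp_all add: algebra_simps)
  note mods = q2 q4 q8 q16
  have m1: "\<not> ((48*j+18) mod 2 = 1 \<or> (48*j+18) mod 4 = 0)" using mods by simp
  have m2: "(48*j+18) mod 8 = 6 \<or> (48*j+18) mod 16 = 2" using mods by simp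
  have h1: "TR (48*j+18) = 12*j+4" using T2[of "12*j+4"] by (simp add: algebra_simps)
  have h2: "TR (12*j+4) = 9*j+3" using T0[of "3*j+1"] by (simp add: algebra_simps)
  show ?thesis using S2[OF m1 m2] by (simp only: h1 h2)
qed

lemma w3: "TRstar (192*j+138) = 9*j+6"
proof -
  have q2: "(192*j+138) mod 2 = 0" by (rule M[of _ _ "96*j+69"]) (simp_all add: algebra_simps)
  have q4: "(192*j+138) mod 4 = 2" by (rule M[of _ _ "48*j+34"]) (simp_all add: algebra_simps)
  have q8: "(192*j+138) mod 8 = 2" by (rule M[of _ _ "24*j+17"]) (simp_all add: algebra_simps)
  have q16: "(192*j+138) mod 16 = 10" by (rule M[of _ _ "12*j+8"]) (simp_all add: algebra_simps)
  have q32: "(192*j+138) mod 32 = 10" by (rule M[of _ _ "6*j+4"]) (simp_all add: algebra_simps)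
  have q64: "(192*j+138) mod 64 = 10" by (rule M[of _ _ "3*j+2"]) (simp_all add: algebra_simps)
  note mods = q2 q4 q8 q16 q32 q64
  have m1: "\<not> ((192*j+138) mod 2 = 1 \<or> (192*j+138) mod 4 = 0)" using mods by simp
  have m2: "\<not> ((192*j+138) mod 8 = 6 \<or> (192*j+138) mod 16 = 2)" using mods by simp
  have m3: "(192*j+138) mod 32 = 26 \<or> (192*j+138) mod 64 = 10 \<or> (192*j+138) mod 64 = 42" using mods by simp
  have h1: "TR (192*j+138) = 48*j+34" using T2[of "48*j+34"] by (simp add: algebra_simps)
  have h2: "TR (48*j+34) = 12*j+8" using T2[of "12*j+8"] by (simp add: algebra_simps)
  have h3: "TR (12*j+8) = 9*j+6" using T0[of "3*j+2"] by (simp add: algebra_simps)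
  show ?thesis using S3[OF m1 m2 m3] by (simp only: h1 h2 h3)
qed

lemma w4: "TRstar (192*j+42) = 3*j"
proof -
  have q2: "(192*j+42) mod 2 = 0" by (rule M[of _ _ "96*j+21"]) (simp_all add: algebra_simps)
  have q4: "(192*j+42) mod 4 = 2" by (rule M[of _ _ "48*j+10"]) (simp_all add: algebra_simps)
  have q8: "(192*j+42) mod 8 = 2" by (rule M[of _ _ "24*j+5"]) (simp_all add: algebra_simps)
  have q16: "(192*j+42) mod 16 = 10" by (rule M[of _ _ "12*j+2"]) (simp_all add: algebra_simps)
  have q32: "(192*j+42) mod 32 = 10" by (rule M[of _ _ "6*j+1"]) (simp_all add: algebra_simps)
  have q64: "(192*j+42) mod 64 = 42" by (rule M[of _ _ "3*j"]) (simp_all add: algebra_simps)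
  note mods = q2 q4 q8 q16 q32 q64
  have m1: "\<not> ((192*j+42) mod 2 = 1 \<or> (192*j+42) mod 4 = 0)" using mods by simp
  have m2: "\<not> ((192*j+42) mod 8 = 6 \<or> (192*j+42) mod 16 = 2)" using mods by simp
  have m3: "(192*j+42) mod 32 = 26 \<or> (192*j+42) mod 64 = 10 \<or> (192*j+42) mod 64 = 42" using mods by simp
  have h1: "TR (192*j+42) = 48*j+10" using T2[of "48*j+10"] by (simp add: algebra_simps)
  have h2: "TR (48*j+10) = 12*j+2" using T2[of "12*j+2"] by (simp add: algebra_simps)
  have h3: "TR (12*j+2) = 3*j" using T2[of "3*j"] by (simp add: algebra_simps)
  show ?thesis using S3[OF m1 m2 m3] by (simp only: h1 h2 h3)
qed

lemma w5: "TRstar (96*j+90) = 9*j+8"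
proof -
  have q2: "(96*j+90) mod 2 = 0" by (rule M[of _ _ "48*j+45"]) (simp_all add: algebra_simps)
  have q4: "(96*j+90) mod 4 = 2" by (rule M[of _ _ "24*j+22"]) (simp_all add: algebra_simps)
  have q8: "(96*j+90) mod 8 = 2" by (rule M[of _ _ "12*j+11"]) (simp_all add: algebra_simps)
  have q16: "(96*j+90) mod 16 = 10" by (rule M[of _ _ "6*j+5"]) (simp_all add: algebra_simps)
  have q32: "(96*j+90) mod 32 = 26" by (rule M[of _ _ "3*j+2"]) (simp_all add: algebra_simps)
  note mods = q2 q4 q8 q16 q32
  have m1: "\<not> ((96*j+90) mod 2 = 1 \<or> (96*j+90) mod 4 = 0)" using mods by simp
  have m2: "\<not> ((96*j+90) mod 8 = 6 \<or> (96*j+90) mod 16 = 2)" using mods by simp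
  have m3: "(96*j+90) mod 32 = 26 \<or> (96*j+90) mod 64 = 10 \<or> (96*j+90) mod 64 = 42" using mods by simp
  have h1: "TR (96*j+90) = 24*j+22" using T2[of "24*j+22"] by (simp add: algebra_simps)
  have h2: "TR (24*j+22) = 6*j+5" using T2[of "6*j+5"] by (simp add: algebra_simps)
  have h3: "TR (6*j+5) = 9*j+8" using T1[of "3*j+2"] by (simp add: algebra_simps)
  show ?thesis using S3[OF m1 m2 m3] by (simp only: h1 h2 h3)
qed

lemma w6: "TRstar (24*j+6) = 9*j+2"
proof -
  have q2: "(24*j+6) mod 2 = 0" by (rule M[of _ _ "12*j+3"]) (simp_all add: algebra_simps)
  have q4: "(24*j+6) mod 4 = 2" by (rule M[of _ _ "6*j+1"]) (simp_all add: algebra_simps)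
  have q8: "(24*j+6) mod 8 = 6" by (rule M[of _ _ "3*j"]) (simp_all add: algebra_simps)
  note mods = q2 q4 q8
  have m1: "\<not> ((24*j+6) mod 2 = 1 \<or> (24*j+6) mod 4 = 0)" using mods by simp
  have m2: "(24*j+6) mod 8 = 6 \<or> (24*j+6) mod 16 = 2" using mods by simp
  have h1: "TR (24*j+6) = 6*j+1" using T2[of "6*j+1"] by (simp add: algebra_simps)
  have h2: "TR (6*j+1) = 9*j+2" using T1[of "3*j"] by (simp add: algebra_simps)
  show ?thesis using S2[OF m1 m2] by (simp only: h1 h2)
qed

lemma w7: "TRstar (6*j+3) = 9*j+5"
proof -
  have q2: "(6*j+3) mod 2 = 1" by (rule M[of _ _ "3*j+1"]) (simp_all add: algebra_simps)
  note mods = q2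
  have m: "(6*j+3) mod 2 = 1 \<or> (6*j+3) mod 4 = 0" using mods by simp
  have h1: "TR (6*j+3) = 9*j+5" using T1[of "3*j+1"] by (simp add: algebra_simps)
  show ?thesis using S1[OF m] h1 by simp
qed

lemma w8: "TRstar (12*j+4) = 9*j+3"
proof -
  have q2: "(12*j+4) mod 2 = 0" by (rule M[of _ _ "6*j+2"]) (simp_all add: algebra_simps)
  have q4: "(12*j+4) mod 4 = 0" by (rule M[of _ _ "3*j+1"]) (simp_all add: algebra_simps)
  note mods = q2 q4
  have m: "(12*j+4) mod 2 = 1 \<or> (12*j+4) mod 4 = 0" using mods by simp
  have h1: "TR (12*j+4) = 9*j+3" using T0[of "3*j+1"] by (simp add: algebra_simps)
  show ?thesis using S1[OF m] h1 by simp
qed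

lemma w9: "TRstar (48*j+34) = 9*j+6"
proof -
  have q2: "(48*j+34) mod 2 = 0" by (rule M[of _ _ "24*j+17"]) (simp_all add: algebra_simps)
  have q4: "(48*j+34) mod 4 = 2" by (rule M[of _ _ "12*j+8"]) (simp_all add: algebra_simps)
  have q8: "(48*j+34) mod 8 = 2" by (rule M[of _ _ "6*j+4"]) (simp_all add: algebra_simps)
  have q16: "(48*j+34) mod 16 = 2" by (rule M[of _ _ "3*j+2"]) (simp_all add: algebra_simps)
  note mods = q2 q4 q8 q16
  have m1: "\<not> ((48*j+34) mod 2 = 1 \<or> (48*j+34) mod 4 = 0)" using mods by simp
  have m2: "(48*j+34) mod 8 = 6 \<or> (48*j+34) mod 16 = 2" using mods by simp
  have h1: "TR (48*j+34) = 12*j+8" using T2[of "12*j+8"] by (simp add: algebra_simps)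
  have h2: "TR (12*j+8) = 9*j+6" using T0[of "3*j+2"] by (simp add: algebra_simps)
  show ?thesis using S2[OF m1 m2] by (simp only: h1 h2)
qed

lemma w10: "TRstar (192*j+10) = 9*j"
proof -
  have q2: "(192*j+10) mod 2 = 0" by (rule M[of _ _ "96*j+5"]) (simp_all add: algebra_simps)
  have q4: "(192*j+10) mod 4 = 2" by (rule M[of _ _ "48*j+2"]) (simp_all add: algebra_simps)
  have q8: "(192*j+10) mod 8 = 2" by (rule M[of _ _ "24*j+1"]) (simp_all add: algebra_simps)
  have q16: "(192*j+10) mod 16 = 10" by (rule M[of _ _ "12*j"]) (simp_all add: algebra_simps)
  have q32: "(192*j+10) mod 32 = 10" by (rule M[of _ _ "6*j"]) (simp_all add: algebra_simps)
  have q64: "(192*j+10) mod 64 = 10" by (rule M[of _ _ "3*j"]) (simp_all add: algebra_simps)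
  note mods = q2 q4 q8 q16 q32 q64
  have m1: "\<not> ((192*j+10) mod 2 = 1 \<or> (192*j+10) mod 4 = 0)" using mods by simp
  have m2: "\<not> ((192*j+10) mod 8 = 6 \<or> (192*j+10) mod 16 = 2)" using mods by simp
  have m3: "(192*j+10) mod 32 = 26 \<or> (192*j+10) mod 64 = 10 \<or> (192*j+10) mod 64 = 42" using mods by simp
  have h1: "TR (192*j+10) = 48*j+2" using T2[of "48*j+2"] by (simp add: algebra_simps)
  have h2: "TR (48*j+2) = 12*j" using T2[of "12*j"] by (simp add: algebra_simps)
  have h3: "TR (12*j) = 9*j" using T0[of "3*j"] by (simp add: algebra_simps)
  show ?thesis using S3[OF m1 m2 m3] by (simp only: h1 h2 h3)
qed

lemma w11: "TRstar (192*j+106) = 3*j+1"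
proof -
  have q2: "(192*j+106) mod 2 = 0" by (rule M[of _ _ "96*j+53"]) (simp_all add: algebra_simps)
  have q4: "(192*j+106) mod 4 = 2" by (rule M[of _ _ "48*j+26"]) (simp_all add: algebra_simps)
  have q8: "(192*j+106) mod 8 = 2" by (rule M[of _ _ "24*j+13"]) (simp_all add: algebra_simps)
  have q16: "(192*j+106) mod 16 = 10" by (rule M[of _ _ "12*j+6"]) (simp_all add: algebra_simps)
  have q32: "(192*j+106) mod 32 = 10" by (rule M[of _ _ "6*j+3"]) (simp_all add: algebra_simps)
  have q64: "(192*j+106) mod 64 = 42" by (rule M[of _ _ "3*j+1"]) (simp_all add: algebra_simps)
  note mods = q2 q4 q8 q16 q32 q64
  have m1: "\<not> ((192*j+106) mod 2 = 1 \<or> (192*j+106) mod 4 = 0)" using mods by simp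
  have m2: "\<not> ((192*j+106) mod 8 = 6 \<or> (192*j+106) mod 16 = 2)" using mods by simp
  have m3: "(192*j+106) mod 32 = 26 \<or> (192*j+106) mod 64 = 10 \<or> (192*j+106) mod 64 = 42" using mods by simp
  have h1: "TR (192*j+106) = 48*j+26" using T2[of "48*j+26"] by (simp add: algebra_simps)
  have h2: "TR (48*j+26) = 12*j+6" using T2[of "12*j+6"] by (simp add: algebra_simps)
  have h3: "TR (12*j+6) = 3*j+1" using T2[of "3*j+1"] by (simp add: algebra_simps)
  show ?thesis using S3[OF m1 m2 m3] by (simp only: h1 h2 h3)
qed

lemma w12: "TRstar (96*j+58) = 9*j+5"
proof -
  have q2: "(96*j+58) mod 2 = 0" by (rule M[of _ _ "48*j+29"]) (simp_all add: algebra_simps)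
  have q4: "(96*j+58) mod 4 = 2" by (rule M[of _ _ "24*j+14"]) (simp_all add: algebra_simps)
  have q8: "(96*j+58) mod 8 = 2" by (rule M[of _ _ "12*j+7"]) (simp_all add: algebra_simps)
  have q16: "(96*j+58) mod 16 = 10" by (rule M[of _ _ "6*j+3"]) (simp_all add: algebra_simps)
  have q32: "(96*j+58) mod 32 = 26" by (rule M[of _ _ "3*j+1"]) (simp_all add: algebra_simps)
  note mods = q2 q4 q8 q16 q32
  have m1: "\<not> ((96*j+58) mod 2 = 1 \<or> (96*j+58) mod 4 = 0)" using mods by simp
  have m2: "\<not> ((96*j+58) mod 8 = 6 \<or> (96*j+58) mod 16 = 2)" using mods by simp
  have m3: "(96*j+58) mod 32 = 26 \<or> (96*j+58) mod 64 = 10 \<or> (96*j+58) mod 64 = 42" using mods by simp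
  have h1: "TR (96*j+58) = 24*j+14" using T2[of "24*j+14"] by (simp add: algebra_simps)
  have h2: "TR (24*j+14) = 6*j+3" using T2[of "6*j+3"] by (simp add: algebra_simps)
  have h3: "TR (6*j+3) = 9*j+5" using T1[of "3*j+1"] by (simp add: algebra_simps)
  show ?thesis using S3[OF m1 m2 m3] by (simp only: h1 h2 h3)
qed

lemma w13: "TRstar (24*j+22) = 9*j+8"
proof -
  have q2: "(24*j+22) mod 2 = 0" by (rule M[of _ _ "12*j+11"]) (simp_all add: algebra_simps)
  have q4: "(24*j+22) mod 4 = 2" by (rule M[of _ _ "6*j+5"]) (simp_all add: algebra_simps)
  have q8: "(24*j+22) mod 8 = 6" by (rule M[of _ _ "3*j+2"]) (simp_all add: algebra_simps)
  note mods = q2 q4 q8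
  have m1: "\<not> ((24*j+22) mod 2 = 1 \<or> (24*j+22) mod 4 = 0)" using mods by simp
  have m2: "(24*j+22) mod 8 = 6 \<or> (24*j+22) mod 16 = 2" using mods by simp
  have h1: "TR (24*j+22) = 6*j+5" using T2[of "6*j+5"] by (simp add: algebra_simps)
  have h2: "TR (6*j+5) = 9*j+8" using T1[of "3*j+2"] by (simp add: algebra_simps)
  show ?thesis using S2[OF m1 m2] by (simp only: h1 h2)
qed

lemma w14: "TRstar (6*j+1) = 9*j+2"
proof -
  have q2: "(6*j+1) mod 2 = 1" by (rule M[of _ _ "3*j"]) (simp_all add: algebra_simps)
  note mods = q2
  have m: "(6*j+1) mod 2 = 1 \<or> (6*j+1) mod 4 = 0" using mods by simp
  have h1: "TR (6*j+1) = 9*j+2" using T1[of "3*j"] by (simp add: algebra_simps)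
  show ?thesis using S1[OF m] h1 by simp
qed

lemma w15: "TRstar (12*j+8) = 9*j+6"
proof -
  have q2: "(12*j+8) mod 2 = 0" by (rule M[of _ _ "6*j+4"]) (simp_all add: algebra_simps)
  have q4: "(12*j+8) mod 4 = 0" by (rule M[of _ _ "3*j+2"]) (simp_all add: algebra_simps)
  note mods = q2 q4
  have m: "(12*j+8) mod 2 = 1 \<or> (12*j+8) mod 4 = 0" using mods by simp
  have h1: "TR (12*j+8) = 9*j+6" using T0[of "3*j+2"] by (simp add: algebra_simps)
  show ?thesis using S1[OF m] h1 by simp
qed

lemma w16: "TRstar (48*j+2) = 9*j"
proof -
  have q2: "(48*j+2) mod 2 = 0" by (rule M[of _ _ "24*j+1"]) (simp_all add: algebra_simps)
  have q4: "(48*j+2) mod 4 = 2" by (rule M[of _ _ "12*j"]) (simp_all add: algebra_simps)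
  have q8: "(48*j+2) mod 8 = 2" by (rule M[of _ _ "6*j"]) (simp_all add: algebra_simps)
  have q16: "(48*j+2) mod 16 = 2" by (rule M[of _ _ "3*j"]) (simp_all add: algebra_simps)
  note mods = q2 q4 q8 q16
  have m1: "\<not> ((48*j+2) mod 2 = 1 \<or> (48*j+2) mod 4 = 0)" using mods by simp
  have m2: "(48*j+2) mod 8 = 6 \<or> (48*j+2) mod 16 = 2" using mods by simp
  have h1: "TR (48*j+2) = 12*j" using T2[of "12*j"] by (simp add: algebra_simps)
  have h2: "TR (12*j) = 9*j" using T0[of "3*j"] by (simp add: algebra_simps)
  show ?thesis using S2[OF m1 m2] by (simp only: h1 h2)
qed

lemma w17: "TRstar (192*j+74) = 9*j+3"
proof -
  have q2: "(192*j+74) mod 2 = 0" by (rule M[of _ _ "96*j+37"]) (simp_all add: algebra_simps)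
  have q4: "(192*j+74) mod 4 = 2" by (rule M[of _ _ "48*j+18"]) (simp_all add: algebra_simps)
  have q8: "(192*j+74) mod 8 = 2" by (rule M[of _ _ "24*j+9"]) (simp_all add: algebra_simps)
  have q16: "(192*j+74) mod 16 = 10" by (rule M[of _ _ "12*j+4"]) (simp_all add: algebra_simps)
  have q32: "(192*j+74) mod 32 = 10" by (rule M[of _ _ "6*j+2"]) (simp_all add: algebra_simps)
  have q64: "(192*j+74) mod 64 = 10" by (rule M[of _ _ "3*j+1"]) (simp_all add: algebra_simps)
  note mods = q2 q4 q8 q16 q32 q64
  have m1: "\<not> ((192*j+74) mod 2 = 1 \<or> (192*j+74) mod 4 = 0)" using mods by simp
  have m2: "\<not> ((192*j+74) mod 8 = 6 \<or> (192*j+74) mod 16 = 2)" using mods by simp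
  have m3: "(192*j+74) mod 32 = 26 \<or> (192*j+74) mod 64 = 10 \<or> (192*j+74) mod 64 = 42" using mods by simp
  have h1: "TR (192*j+74) = 48*j+18" using T2[of "48*j+18"] by (simp add: algebra_simps)
  have h2: "TR (48*j+18) = 12*j+4" using T2[of "12*j+4"] by (simp add: algebra_simps)
  have h3: "TR (12*j+4) = 9*j+3" using T0[of "3*j+1"] by (simp add: algebra_simps)
  show ?thesis using S3[OF m1 m2 m3] by (simp only: h1 h2 h3)
qed

lemma w18: "TRstar (192*j+170) = 3*j+2"
proof -
  have q2: "(192*j+170) mod 2 = 0" by (rule M[of _ _ "96*j+85"]) (simp_all add: algebra_simps)
  have q4: "(192*j+170) mod 4 = 2" by (rule M[of _ _ "48*j+42"]) (simp_all add: algebra_simps)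
  have q8: "(192*j+170) mod 8 = 2" by (rule M[of _ _ "24*j+21"]) (simp_all add: algebra_simps)
  have q16: "(192*j+170) mod 16 = 10" by (rule M[of _ _ "12*j+10"]) (simp_all add: algebra_simps)
  have q32: "(192*j+170) mod 32 = 10" by (rule M[of _ _ "6*j+5"]) (simp_all add: algebra_simps)
  have q64: "(192*j+170) mod 64 = 42" by (rule M[of _ _ "3*j+2"]) (simp_all add: algebra_simps)
  note mods = q2 q4 q8 q16 q32 q64
  have m1: "\<not> ((192*j+170) mod 2 = 1 \<or> (192*j+170) mod 4 = 0)" using mods by simp
  have m2: "\<not> ((192*j+170) mod 8 = 6 \<or> (192*j+170) mod 16 = 2)" using mods by simp
  have m3: "(192*j+170) mod 32 = 26 \<or> (192*j+170) mod 64 = 10 \<or> (192*j+170) mod 64 = 42" using mods by simp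
  have h1: "TR (192*j+170) = 48*j+42" using T2[of "48*j+42"] by (simp add: algebra_simps)
  have h2: "TR (48*j+42) = 12*j+10" using T2[of "12*j+10"] by (simp add: algebra_simps)
  have h3: "TR (12*j+10) = 3*j+2" using T2[of "3*j+2"] by (simp add: algebra_simps)
  show ?thesis using S3[OF m1 m2 m3] by (simp only: h1 h2 h3)
qed

lemma w19: "TRstar (96*j+26) = 9*j+2"
proof -
  have q2: "(96*j+26) mod 2 = 0" by (rule M[of _ _ "48*j+13"]) (simp_all add: algebra_simps)
  have q4: "(96*j+26) mod 4 = 2" by (rule M[of _ _ "24*j+6"]) (simp_all add: algebra_simps)
  have q8: "(96*j+26) mod 8 = 2" by (rule M[of _ _ "12*j+3"]) (simp_all add: algebra_simps)
  have q16: "(96*j+26) mod 16 = 10" by (rule M[of _ _ "6*j+1"]) (simp_all add: algebra_simps)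
  have q32: "(96*j+26) mod 32 = 26" by (rule M[of _ _ "3*j"]) (simp_all add: algebra_simps)
  note mods = q2 q4 q8 q16 q32
  have m1: "\<not> ((96*j+26) mod 2 = 1 \<or> (96*j+26) mod 4 = 0)" using mods by simp
  have m2: "\<not> ((96*j+26) mod 8 = 6 \<or> (96*j+26) mod 16 = 2)" using mods by simp
  have m3: "(96*j+26) mod 32 = 26 \<or> (96*j+26) mod 64 = 10 \<or> (96*j+26) mod 64 = 42" using mods by simp
  have h1: "TR (96*j+26) = 24*j+6" using T2[of "24*j+6"] by (simp add: algebra_simps)
  have h2: "TR (24*j+6) = 6*j+1" using T2[of "6*j+1"] by (simp add: algebra_simps)
  have h3: "TR (6*j+1) = 9*j+2" using T1[of "3*j"] by (simp add: algebra_simps)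
  show ?thesis using S3[OF m1 m2 m3] by (simp only: h1 h2 h3)
qed

lemma w20: "TRstar (24*j+14) = 9*j+5"
proof -
  have q2: "(24*j+14) mod 2 = 0" by (rule M[of _ _ "12*j+7"]) (simp_all add: algebra_simps)
  have q4: "(24*j+14) mod 4 = 2" by (rule M[of _ _ "6*j+3"]) (simp_all add: algebra_simps)
  have q8: "(24*j+14) mod 8 = 6" by (rule M[of _ _ "3*j+1"]) (simp_all add: algebra_simps)
  note mods = q2 q4 q8
  have m1: "\<not> ((24*j+14) mod 2 = 1 \<or> (24*j+14) mod 4 = 0)" using mods by simp
  have m2: "(24*j+14) mod 8 = 6 \<or> (24*j+14) mod 16 = 2" using mods by simp
  have h1: "TR (24*j+14) = 6*j+3" using T2[of "6*j+3"] by (simp add: algebra_simps)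
  have h2: "TR (6*j+3) = 9*j+5" using T1[of "3*j+1"] by (simp add: algebra_simps)
  show ?thesis using S2[OF m1 m2] by (simp only: h1 h2)
qed

lemma w21: "TRstar (6*j+5) = 9*j+8"
proof -
  have q2: "(6*j+5) mod 2 = 1" by (rule M[of _ _ "3*j+2"]) (simp_all add: algebra_simps)
  note mods = q2
  have m: "(6*j+5) mod 2 = 1 \<or> (6*j+5) mod 4 = 0" using mods by simp
  have h1: "TR (6*j+5) = 9*j+8" using T1[of "3*j+2"] by (simp add: algebra_simps)
  show ?thesis using S1[OF m] h1 by simp
qed

lemma v0: "TRstar (12*j) = 9*j \<and> TRstar (48*j+18) = 9*j+3 \<and> TRstar (192*j+138) = 9*j+6 \<and>
      TRstar (192*j+42) = 3*j \<and> TRstar (96*j+90) = 9*j+8 \<and> TRstar (24*j+6) = 9*j+2 \<and>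
      TRstar (6*j+3) = 9*j+5"
  using w1 w2 w3 w4 w5 w6 w7 by simp
lemma v1: "TRstar (12*j+4) = 9*j+3 \<and> TRstar (48*j+34) = 9*j+6 \<and> TRstar (192*j+10) = 9*j \<and>
      TRstar (192*j+106) = 3*j+1 \<and> TRstar (96*j+58) = 9*j+5 \<and> TRstar (24*j+22) = 9*j+8 \<and>
      TRstar (6*j+1) = 9*j+2"
  using w8 w9 w10 w11 w12 w13 w14 by simp
lemma v2: "TRstar (12*j+8) = 9*j+6 \<and> TRstar (48*j+2) = 9*j \<and> TRstar (192*j+74) = 9*j+3 \<and>
      TRstar (192*j+170) = 3*j+2 \<and> TRstar (96*j+26) = 9*j+2 \<and> TRstar (24*j+14) = 9*j+5 \<and>
      TRstar (6*j+5) = 9*j+8"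
  using w15 w16 w17 w18 w19 w20 w21 by simp

lemma ex_of_mod: "(n::int) mod k = c \<Longrightarrow> \<exists>j. n = k*j + c"
  using mult_div_mod_eq[of k n] by (intro exI[of _ "n div k"]) simp
lemma R: assumes "0 \<le> c" "c < k" shows "range (\<lambda>j::int. k*j+c) = {x. x mod k = c}"
proof (intro set_eqI iffI)
  fix x assume "x \<in> range (\<lambda>j::int. k*j+c)"
  then obtain j where "x = k*j+c" by auto
  then show "x \<in> {x. x mod k = c}" using M[of x k j c] assms by simp
next
  fix x assume "x \<in> {x. x mod k = c}"
  then have "x mod k = c" by simp
  then have "x = k*(x div k) + c" using mult_div_mod_eq[of k x] by simp
  then show "x \<in> range (\<lambda>j::int. k*j+c)" by (rule range_eqI)
qed
lemma R0: "0 < k \<Longrightarrow> range (\<lambda>j::int. k*j) = {x. x mod k = 0}"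
  using R[of 0 k] by simp
lemma DJ: "(x::int) mod a = c \<Longrightarrow> x mod b = d \<Longrightarrow> (b dvd a \<and> c mod b \<noteq> d) \<or> (a dvd b \<and> d mod a \<noteq> c) \<Longrightarrow> False"
proof -
  assume a: "x mod a = c" "x mod b = d" and "(b dvd a \<and> c mod b \<noteq> d) \<or> (a dvd b \<and> d mod a \<noteq> c)"
  then show False
  proof (elim disjE conjE)
    assume "b dvd a" "c mod b \<noteq> d"
    moreover have "x mod a mod b = x mod b" by (rule mod_mod_cancel) fact
    ultimately show False using a by simp
  next
    assume "a dvd b" "d mod a \<noteq> c"
    moreover have "x mod b mod a = x mod a" by (rule mod_mod_cancel) fact
    ultimately show False using a by simp
  qed
qed
lemma SUB: "(x::int) mod a = c \<Longrightarrow> 3 dvd a \<Longrightarrow> x mod 3 = c mod 3"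
proof -
  assume "x mod a = c" "3 dvd a"
  moreover have "x mod a mod 3 = x mod 3" by (rule mod_mod_cancel) fact
  ultimately show ?thesis by simp
qed
lemma len7: "length [a,b,c,d,e,f,g] = Suc(Suc(Suc(Suc(Suc(Suc(Suc 0))))))" by simp
lemma mm: "(n::int) mod 192 mod 3 = n mod 3" "n mod 192 mod 12 = n mod 12" "n mod 192 mod 48 = n mod 48"
  "n mod 192 mod 96 = n mod 96" "n mod 192 mod 24 = n mod 24" "n mod 192 mod 6 = n mod 6"
  by (simp_all add: mod_mod_cancel)
lemma L3: "(3*j + c) mod 3 = c mod (3::int)" "(9*j + c) mod 3 = c mod (3::int)" "(3*j) mod 3 = (0::int)" "(9*j) mod 3 = (0::int)"
proof -
  have e1: "3*j+c = c + j*3" by simp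
  show "(3*j + c) mod 3 = c mod (3::int)" unfolding e1 by (rule mod_mult_self1)
  have e2: "9*j+c = c + (3*j)*3" by simp
  show "(9*j + c) mod 3 = c mod (3::int)" unfolding e2 by (rule mod_mult_self1)
  show "(3*j) mod 3 = (0::int)" by simp
  have e3: "9*j = (3*j)*3" by simp
  show "(9*j) mod 3 = (0::int)" unfolding e3 by simp
qed

lemma cov0: "(n::int) mod 3 = 0 \<Longrightarrow> n mod 12 = 0 \<or> n mod 48 = 18 \<or> n mod 192 = 138 \<or> n mod 192 = 42 \<or> n mod 96 = 90 \<or> n mod 24 = 6 \<or> n mod 6 = 3"
proof -
  assume a: "n mod 3 = 0"
  have "\<forall>r\<in>{0..<192::int}. r mod 3 = 0 \<longrightarrow> r mod 12 = 0 \<or> r mod 48 = 18 \<or> r = 138 \<or> r = 42 \<or> r mod 96 = 90 \<or> r mod 24 = 6 \<or> r mod 6 = 3"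
    by code_simp
  note H = this
  have r: "n mod 192 \<in> {0..<192::int}" by simp
  have a': "n mod 192 mod 3 = 0" using a by (simp only: mm)
  have "n mod 192 mod 12 = 0 \<or> n mod 192 mod 48 = 18 \<or> n mod 192 = 138 \<or> n mod 192 = 42 \<or> n mod 192 mod 96 = 90 \<or> n mod 192 mod 24 = 6 \<or> n mod 192 mod 6 = 3" using H[rule_format, OF r a'] .
  then show ?thesis by (simp only: mm)
qed
lemma c0: "(n::int) mod 3 = 0 \<Longrightarrow> (\<exists>j. n = 12*j) \<or> (\<exists>j. n = 48*j+18) \<or> (\<exists>j. n = 192*j+138) \<or> (\<exists>j. n = 192*j+42) \<or> (\<exists>j. n = 96*j+90) \<or> (\<exists>j. n = 24*j+6) \<or> (\<exists>j. n = 6*j+3)"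
proof -
  assume a: "n mod 3 = 0"
  have "n mod 12 = 0 \<or> n mod 48 = 18 \<or> n mod 192 = 138 \<or> n mod 192 = 42 \<or> n mod 96 = 90 \<or> n mod 24 = 6 \<or> n mod 6 = 3" using cov0[OF a] .
  then show ?thesis using ex_of_mod[of n 12 0] ex_of_mod[of n 48 18] ex_of_mod[of n 192 138] ex_of_mod[of n 192 42] ex_of_mod[of n 96 90] ex_of_mod[of n 24 6] ex_of_mod[of n 6 3] by auto
qed
lemma p0: "partitions_list
     [range (\<lambda>j::int. 12*j), range (\<lambda>j::int. 48*j+18), range (\<lambda>j::int. 192*j+138), range (\<lambda>j::int. 192*j+42), range (\<lambda>j::int. 96*j+90), range (\<lambda>j::int. 24*j+6), range (\<lambda>j::int. 6*j+3)]
     {n. n mod 3 = 0}"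
proof -
  have eqs: "range (\<lambda>j::int. 12*j) = {x. x mod 12 = 0}" "range (\<lambda>j::int. 48*j+18) = {x. x mod 48 = 18}" "range (\<lambda>j::int. 192*j+138) = {x. x mod 192 = 138}" "range (\<lambda>j::int. 192*j+42) = {x. x mod 192 = 42}" "range (\<lambda>j::int. 96*j+90) = {x. x mod 96 = 90}" "range (\<lambda>j::int. 24*j+6) = {x. x mod 24 = 6}" "range (\<lambda>j::int. 6*j+3) = {x. x mod 6 = 3}"
    by (simp_all add: R R0)
  show ?thesis
  unfolding partitions_list_def eqs len7
  apply (intro conjI)
   apply (simp only: All_less_Suc2 not_less0 nth_Cons_0 nth_Cons_Suc Suc_inject nat.distinct simp_thms)
   apply (auto simp: disjoint_iff) [1]
                      apply ((drule dvd_imp_mod_0)?, erule (1) DJ, simp)+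
  apply (rule set_eqI)
  apply (simp only: set_simps Union_insert Union_empty Un_empty_right Un_iff mem_Collect_eq)
  apply (rule iffI)
   apply (elim disjE; drule SUB; simp)
  apply (erule cov0)
  done
qed

lemma cov1: "(n::int) mod 3 = 1 \<Longrightarrow> n mod 12 = 4 \<or> n mod 48 = 34 \<or> n mod 192 = 10 \<or> n mod 192 = 106 \<or> n mod 96 = 58 \<or> n mod 24 = 22 \<or> n mod 6 = 1"
proof -
  assume a: "n mod 3 = 1"
  have "\<forall>r\<in>{0..<192::int}. r mod 3 = 1 \<longrightarrow> r mod 12 = 4 \<or> r mod 48 = 34 \<or> r = 10 \<or> r = 106 \<or> r mod 96 = 58 \<or> r mod 24 = 22 \<or> r mod 6 = 1"
    by code_simp
  note H = this
  have r: "n mod 192 \<in> {0..<192::int}" by simp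
  have a': "n mod 192 mod 3 = 1" using a by (simp only: mm)
  have "n mod 192 mod 12 = 4 \<or> n mod 192 mod 48 = 34 \<or> n mod 192 = 10 \<or> n mod 192 = 106 \<or> n mod 192 mod 96 = 58 \<or> n mod 192 mod 24 = 22 \<or> n mod 192 mod 6 = 1" using H[rule_format, OF r a'] .
  then show ?thesis by (simp only: mm)
qed
lemma c1: "(n::int) mod 3 = 1 \<Longrightarrow> (\<exists>j. n = 12*j+4) \<or> (\<exists>j. n = 48*j+34) \<or> (\<exists>j. n = 192*j+10) \<or> (\<exists>j. n = 192*j+106) \<or> (\<exists>j. n = 96*j+58) \<or> (\<exists>j. n = 24*j+22) \<or> (\<exists>j. n = 6*j+1)"
proof -
  assume a: "n mod 3 = 1"
  have "n mod 12 = 4 \<or> n mod 48 = 34 \<or> n mod 192 = 10 \<or> n mod 192 = 106 \<or> n mod 96 = 58 \<or> n mod 24 = 22 \<or> n mod 6 = 1" using cov1[OF a] .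
  then show ?thesis using ex_of_mod[of n 12 4] ex_of_mod[of n 48 34] ex_of_mod[of n 192 10] ex_of_mod[of n 192 106] ex_of_mod[of n 96 58] ex_of_mod[of n 24 22] ex_of_mod[of n 6 1] by auto
qed
lemma p1: "partitions_list
     [range (\<lambda>j::int. 12*j+4), range (\<lambda>j::int. 48*j+34), range (\<lambda>j::int. 192*j+10), range (\<lambda>j::int. 192*j+106), range (\<lambda>j::int. 96*j+58), range (\<lambda>j::int. 24*j+22), range (\<lambda>j::int. 6*j+1)]
     {n. n mod 3 = 1}"
proof -
  have eqs: "range (\<lambda>j::int. 12*j+4) = {x. x mod 12 = 4}" "range (\<lambda>j::int. 48*j+34) = {x. x mod 48 = 34}" "range (\<lambda>j::int. 192*j+10) = {x. x mod 192 = 10}" "range (\<lambda>j::int. 192*j+106) = {x. x mod 192 = 106}" "range (\<lambda>j::int. 96*j+58) = {x. x mod 96 = 58}" "range (\<lambda>j::int. 24*j+22) = {x. x mod 24 = 22}" "range (\<lambda>j::int. 6*j+1) = {x. x mod 6 = 1}"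
    by (simp_all add: R R0)
  show ?thesis
  unfolding partitions_list_def eqs len7
  apply (intro conjI)
   apply (simp only: All_less_Suc2 not_less0 nth_Cons_0 nth_Cons_Suc Suc_inject nat.distinct simp_thms)
   apply (auto simp: disjoint_iff) [1]
                      apply ((drule dvd_imp_mod_0)?, erule (1) DJ, simp)+
  apply (rule set_eqI)
  apply (simp only: set_simps Union_insert Union_empty Un_empty_right Un_iff mem_Collect_eq)
  apply (rule iffI)
   apply (elim disjE; drule SUB; simp)
  apply (erule cov1)
  done
qed

lemma cov2: "(n::int) mod 3 = 2 \<Longrightarrow> n mod 12 = 8 \<or> n mod 48 = 2 \<or> n mod 192 = 74 \<or> n mod 192 = 170 \<or> n mod 96 = 26 \<or> n mod 24 = 14 \<or> n mod 6 = 5"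
proof -
  assume a: "n mod 3 = 2"
  have "\<forall>r\<in>{0..<192::int}. r mod 3 = 2 \<longrightarrow> r mod 12 = 8 \<or> r mod 48 = 2 \<or> r = 74 \<or> r = 170 \<or> r mod 96 = 26 \<or> r mod 24 = 14 \<or> r mod 6 = 5"
    by code_simp
  note H = this
  have r: "n mod 192 \<in> {0..<192::int}" by simp
  have a': "n mod 192 mod 3 = 2" using a by (simp only: mm)
  have "n mod 192 mod 12 = 8 \<or> n mod 192 mod 48 = 2 \<or> n mod 192 = 74 \<or> n mod 192 = 170 \<or> n mod 192 mod 96 = 26 \<or> n mod 192 mod 24 = 14 \<or> n mod 192 mod 6 = 5" using H[rule_format, OF r a'] .
  then show ?thesis by (simp only: mm)
qed
lemma c2: "(n::int) mod 3 = 2 \<Longrightarrow> (\<exists>j. n = 12*j+8) \<or> (\<exists>j. n = 48*j+2) \<or> (\<exists>j. n = 192*j+74) \<or> (\<exists>j. n = 192*j+170) \<or> (\<exists>j. n = 96*j+26) \<or> (\<exists>j. n = 24*j+14) \<or> (\<exists>j. n = 6*j+5)"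
proof -
  assume a: "n mod 3 = 2"
  have "n mod 12 = 8 \<or> n mod 48 = 2 \<or> n mod 192 = 74 \<or> n mod 192 = 170 \<or> n mod 96 = 26 \<or> n mod 24 = 14 \<or> n mod 6 = 5" using cov2[OF a] .
  then show ?thesis using ex_of_mod[of n 12 8] ex_of_mod[of n 48 2] ex_of_mod[of n 192 74] ex_of_mod[of n 192 170] ex_of_mod[of n 96 26] ex_of_mod[of n 24 14] ex_of_mod[of n 6 5] by auto
qed
lemma p2: "partitions_list
     [range (\<lambda>j::int. 12*j+8), range (\<lambda>j::int. 48*j+2), range (\<lambda>j::int. 192*j+74), range (\<lambda>j::int. 192*j+170), range (\<lambda>j::int. 96*j+26), range (\<lambda>j::int. 24*j+14), range (\<lambda>j::int. 6*j+5)]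
     {n. n mod 3 = 2}"
proof -
  have eqs: "range (\<lambda>j::int. 12*j+8) = {x. x mod 12 = 8}" "range (\<lambda>j::int. 48*j+2) = {x. x mod 48 = 2}" "range (\<lambda>j::int. 192*j+74) = {x. x mod 192 = 74}" "range (\<lambda>j::int. 192*j+170) = {x. x mod 192 = 170}" "range (\<lambda>j::int. 96*j+26) = {x. x mod 96 = 26}" "range (\<lambda>j::int. 24*j+14) = {x. x mod 24 = 14}" "range (\<lambda>j::int. 6*j+5) = {x. x mod 6 = 5}"
    by (simp_all add: R R0)
  show ?thesis
  unfolding partitions_list_def eqs len7
  apply (intro conjI)
   apply (simp only: All_less_Suc2 not_less0 nth_Cons_0 nth_Cons_Suc Suc_inject nat.distinct simp_thms)
   apply (auto simp: disjoint_iff) [1]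
                      apply ((drule dvd_imp_mod_0)?, erule (1) DJ, simp)+
  apply (rule set_eqI)
  apply (simp only: set_simps Union_insert Union_empty Un_empty_right Un_iff mem_Collect_eq)
  apply (rule iffI)
   apply (elim disjE; drule SUB; simp)
  apply (erule cov2)
  done
qed


theorem theorem2:
  shows
  "(\<forall>j::int.
      TRstar (12*j) = 9*j \<and> TRstar (48*j+18) = 9*j+3 \<and> TRstar (192*j+138) = 9*j+6 \<and>
      TRstar (192*j+42) = 3*j \<and> TRstar (96*j+90) = 9*j+8 \<and> TRstar (24*j+6) = 9*j+2 \<and>
      TRstar (6*j+3) = 9*j+5) \<and>
   (\<forall>j::int.
      TRstar (12*j+4) = 9*j+3 \<and> TRstar (48*j+34) = 9*j+6 \<and> TRstar (192*j+10) = 9*j \<and>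
      TRstar (192*j+106) = 3*j+1 \<and> TRstar (96*j+58) = 9*j+5 \<and> TRstar (24*j+22) = 9*j+8 \<and>
      TRstar (6*j+1) = 9*j+2) \<and>
   (\<forall>j::int.
      TRstar (12*j+8) = 9*j+6 \<and> TRstar (48*j+2) = 9*j \<and> TRstar (192*j+74) = 9*j+3 \<and>
      TRstar (192*j+170) = 3*j+2 \<and> TRstar (96*j+26) = 9*j+2 \<and> TRstar (24*j+14) = 9*j+5 \<and>
      TRstar (6*j+5) = 9*j+8) \<and>
   partitions_list
     [range (\<lambda>j::int. 12*j), range (\<lambda>j. 48*j+18), range (\<lambda>j. 192*j+138),
      range (\<lambda>j. 192*j+42), range (\<lambda>j. 96*j+90), range (\<lambda>j. 24*j+6), range (\<lambda>j. 6*j+3)]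
     {n. n mod 3 = 0} \<and>
   partitions_list
     [range (\<lambda>j::int. 12*j+4), range (\<lambda>j. 48*j+34), range (\<lambda>j. 192*j+10),
      range (\<lambda>j. 192*j+106), range (\<lambda>j. 96*j+58), range (\<lambda>j. 24*j+22), range (\<lambda>j. 6*j+1)]
     {n. n mod 3 = 1} \<and>
   partitions_list
     [range (\<lambda>j::int. 12*j+8), range (\<lambda>j. 48*j+2), range (\<lambda>j. 192*j+74),
      range (\<lambda>j. 192*j+170), range (\<lambda>j. 96*j+26), range (\<lambda>j. 24*j+14), range (\<lambda>j. 6*j+5)]
     {n. n mod 3 = 2} \<and>
   (\<forall>n::int. n mod 3 \<in> {0, 2} \<longrightarrow> TRstar n mod 3 \<in> {0, 2})"
proof -
  have last: "\<forall>n::int. n mod 3 \<in> {0, 2} \<longrightarrow> TRstar n mod 3 \<in> {0, 2}"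
  proof (intro allI impI)
    fix n :: int assume "n mod 3 \<in> {0, 2}"
    then consider "n mod 3 = 0" | "n mod 3 = 2" by auto
    then show "TRstar n mod 3 \<in> {0, 2}"
    proof cases
      case 1 then show ?thesis using c0[OF 1] v0 by (elim disjE exE; simp add: L3)
    next
      case 2 then show ?thesis using c2[OF 2] v2 by (elim disjE exE; simp add: L3)
    qed
  qed
  have A: "\<forall>j::int. TRstar (12*j) = 9*j \<and> TRstar (48*j+18) = 9*j+3 \<and> TRstar (192*j+138) = 9*j+6 \<and>
      TRstar (192*j+42) = 3*j \<and> TRstar (96*j+90) = 9*j+8 \<and> TRstar (24*j+6) = 9*j+2 \<and>
      TRstar (6*j+3) = 9*j+5" by (rule allI, rule v0)
  have B: "\<forall>j::int. TRstar (12*j+4) = 9*j+3 \<and> TRstar (48*j+34) = 9*j+6 \<and> TRstar (192*j+10) = 9*j \<and>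
      TRstar (192*j+106) = 3*j+1 \<and> TRstar (96*j+58) = 9*j+5 \<and> TRstar (24*j+22) = 9*j+8 \<and>
      TRstar (6*j+1) = 9*j+2" by (rule allI, rule v1)
  have C: "\<forall>j::int. TRstar (12*j+8) = 9*j+6 \<and> TRstar (48*j+2) = 9*j \<and> TRstar (192*j+74) = 9*j+3 \<and>
      TRstar (192*j+170) = 3*j+2 \<and> TRstar (96*j+26) = 9*j+2 \<and> TRstar (24*j+14) = 9*j+5 \<and>
      TRstar (6*j+5) = 9*j+8" by (rule allI, rule v2)
  show ?thesis by (rule conjI[OF A conjI[OF B conjI[OF C conjI[OF p0 conjI[OF p1 conjI[OF p2 last]]]]]])
qed

end
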